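(* Let $\theta>1$ and $\lambda>1$ be real numbers. For $N\ge 2$ and $1\le r\le N-1$ let \[ P_r(N,\theta)=\frac{r(1-\theta)\sum_{i=r}^{N-1}\frac{\theta^i}{i}}{1-\theta^N}, \] the probability of winning the weighted game of best choice on $N$ candidates with the strategy rejecting $r$ initial candidates. Then, with $r=N/\lambda$, \[ \lim_{N\to\infty} P_{N/\lambda}(N,\theta)=\frac{1}{\lambda}. \]
   Context: In the weighted game of best choice, a permutation $\pi$ of $\{1,\dots,N\}$ is drawn with probability proportional to $\theta^{\pi^{-1}(N)-1}$ (where $\pi^{-1}(N)$ is the position of the best candidate $N$); the player rejects the first $r$ candidates and then accepts the next candidate better than all previous ones, winning if that candidate is $N$. Here $N/\lambda$ is to be understood as an integer number of rejected candidates (e.g. taking $N$ along values for which it is an integer, or rounding). *)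

theory Defs
  imports Complex_Main
begin

definition P_win :: "nat \<Rightarrow> nat \<Rightarrow> real \<Rightarrow> real" where
  "P_win r N \<theta> = (real r * (1 - \<theta>) * (\<Sum>i = r..N - 1. \<theta> ^ i / real i)) / (1 - \<theta> ^ N)"

end

theory Submission
  imports Defs
begin

lemma kx_closed:
  fixes x :: real
  shows "(1-x)^2 * (\<Sum>k<m. real k * x^k) = x - real m * x^m + (real m - 1) * x^(Suc m)"
proof (induction m)
  case 0 then show ?case by simp
next
  case (Suc m)
  have "(1-x)^2 * (\<Sum>k<Suc m. real k * x^k) = (1-x)^2 * (\<Sum>k<m. real k * x^k) + (1-x)^2 * (real m * x^m)"
    by (simp add: algebra_simps)
  also have "\<dots> = x - real (Suc m) * x^(Suc m) + (real (Suc m) - 1) * x^(Suc (Suc m))"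
    unfolding Suc.IH by (simp add: power2_eq_square algebra_simps)
  finally show ?case .
qed

lemma kx_bound:
  fixes x :: real
  assumes "0 \<le> x" "x < 1"
  shows "(\<Sum>k=1..m. real k * x^k) \<le> x / (1-x)^2"
proof -
  have "(\<Sum>k=1..m. real k * x^k) \<le> (\<Sum>k<Suc m. real k * x^k)"
    by (rule sum_mono2) (use assms in auto)
  also have "(1-x)^2 * (\<Sum>k<Suc m. real k * x^k) \<le> x"
  proof -
    have "(real (Suc m) - 1) * x^(Suc (Suc m)) \<le> real (Suc m) * x^(Suc m)"
    proof -
      have "(real (Suc m) - 1) * x^(Suc (Suc m)) \<le> real (Suc m) * x^(Suc (Suc m))" using assms by (intro mult_right_mono) auto
      also have "\<dots> \<le> real (Suc m) * x^(Suc m)"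
        using assms by (intro mult_left_mono power_decreasing) auto
      finally show ?thesis .
    qed
    then show ?thesis unfolding kx_closed by simp
  qed
  then have "(\<Sum>k<Suc m. real k * x^k) \<le> x / (1-x)^2"
    using assms by (simp add: pos_le_divide_eq mult.commute)
  finally show ?thesis .
qed

lemma geo_fin: "(\<Sum>k=1..m. (x::real)^k) * (1 - x) = x * (1 - x^m)"
proof (induction m)
  case 0 then show ?case by simp
next
  case (Suc m)
  have "(\<Sum>k=1..Suc m. x^k) * (1 - x) = (\<Sum>k=1..m. x^k) * (1 - x) + x^Suc m * (1 - x)"
    by (simp add: algebra_simps)
  also have "\<dots> = x * (1 - x^m) + x^Suc m * (1 - x)" using Suc.IH by simp
  also have "\<dots> = x * (1 - x^Suc m)" by (simp add: algebra_simps)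
  finally show ?case .
qed

lemma lin_top:
  fixes f :: "nat \<Rightarrow> nat"
  assumes c: "c > 0" and b: "\<And>N. c * real N - d \<le> real (f N)"
  shows "filterlim f at_top sequentially"
  unfolding filterlim_at_top
proof
  fix Z :: nat
  show "eventually (\<lambda>N. Z \<le> f N) sequentially"
    using eventually_ge_at_top[of "nat \<lceil>(real Z + d) / c\<rceil>"]
  proof eventually_elim
    case (elim N)
    then have "real N \<ge> (real Z + d) / c" by linarith
    then have "c * real N \<ge> real Z + d" using c by (simp add: field_simps)
    with b[of N] have "real Z \<le> real (f N)" by linarith
    then show ?case by simp
  qed
qed

lemma reindex:
  fixes g :: "nat \<Rightarrow> real"
  assumes "1 \<le> r" "r \<le> N"
  shows "(\<Sum>i=r..N-1. g i) = (\<Sum>k=1..N-r. g (N-k))"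
  by (rule sum.reindex_bij_witness[where i="\<lambda>i. N - i" and j="\<lambda>k. N-k"]) (use assms in auto)


lemma main_lim:
  fixes \<theta> lam :: real
  assumes th: "\<theta> > 1" and lam: "lam > 1"
  shows "(\<lambda>N. (real (nat \<lfloor>real N / lam\<rfloor>) * (1 - \<theta>) * (\<Sum>i = nat \<lfloor>real N / lam\<rfloor>..N - 1. \<theta> ^ i / real i)) / (1 - \<theta> ^ N)) \<longlonglongrightarrow> 1 / lam"
proof -
  define r where "r N = nat \<lfloor>real N / lam\<rfloor>" for N :: nat
  define x where "x = 1 / \<theta>"
  have x0: "0 < x" and x1: "x < 1" using th by (auto simp: x_def)
  have rle: "real (r N) \<le> real N / lam" for N
    using lam by (simp add: r_def)
  have rge: "real (r N) \<ge> real N / lam - 1" for N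
    using lam by (simp add: r_def)
  have r_top: "filterlim r at_top sequentially"
    by (rule lin_top[where c="1/lam" and d=1]) (use lam rge in auto)
  have nr_top: "filterlim (\<lambda>N. N - r N) at_top sequentially"
  proof (rule lin_top[where c="1 - 1/lam" and d=0])
    show "0 < 1 - 1/lam" using lam by simp
    fix N
    have "real N / lam \<le> real N / 1" using lam by (intro divide_left_mono) auto
    then have "real (r N) \<le> real N" using rle[of N] by simp
    then have "real (N - r N) = real N - real (r N)" by simp
    then show "(1 - 1/lam) * real N - 0 \<le> real (N - r N)" using rle[of N]
      by (simp add: algebra_simps)
  qed
  have ev_r1: "eventually (\<lambda>N. 1 \<le> r N) sequentially"
    using r_top by (simp add: filterlim_at_top)
  have rltN: "r N < N" if "N > 0" for N
  proof -
    have "real N / lam < real N" using lam that by (simp add: divide_less_eq)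
    with rle[of N] show ?thesis by linarith
  qed
  define Q where "Q N = (\<Sum>k=1..N - r N. x^k * real N / real (N-k))" for N
  define G where "G N = (\<Sum>k=1..N - r N. x^k)" for N
  have Qlow: "G N \<le> Q N" if "N > 0" "r N \<ge> 1" for N
    unfolding G_def Q_def
  proof (rule sum_mono)
    fix k assume k: "k \<in> {1..N - r N}"
    then have "N - k > 0" using rltN[OF that(1)] that(2) k by auto
    then show "x^k \<le> x^k * real N / real (N-k)"
      using x0 k by (simp add: field_simps mult_left_mono)
  qed
  have Qup: "Q N \<le> G N + (x/(1-x)^2) / real (r N)" if "N > 0" "r N \<ge> 1" for N
  proof -
    have "Q N \<le> (\<Sum>k=1..N - r N. x^k + (real k * x^k) / real (r N))"
      unfolding Q_def
    proof (rule sum_mono)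
      fix k assume k: "k \<in> {1..N - r N}"
      then have Nk: "real (N - k) \<ge> real (r N)" "k \<le> N" by auto
      have "real N / real (N-k) = 1 + real k / real (N-k)"
        using Nk that by (simp add: field_simps)
      also have "\<dots> \<le> 1 + real k / real (r N)"
        using Nk that by (intro add_left_mono divide_left_mono) auto
      finally have "x^k * (real N / real (N-k)) \<le> x^k * (1 + real k / real (r N))"
        using x0 by (intro mult_left_mono) auto
      then show "x^k * real N / real (N-k) \<le> x^k + (real k * x^k) / real (r N)"
        by (simp add: algebra_simps)
    qed
    also have "\<dots> = G N + (\<Sum>k=1..N - r N. real k * x^k) / real (r N)"
      unfolding G_def by (simp add: sum.distrib sum_divide_distrib)
    also have "\<dots> \<le> G N + (x/(1-x)^2) / real (r N)"
      using kx_bound[of x "N - r N"] x0 x1 that by (intro add_left_mono divide_right_mono) auto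
    finally show ?thesis .
  qed
  have Gform: "G N = x * (1 - x^(N - r N)) / (1 - x)" for N
  proof -
    have "G N * (1 - x) = x * (1 - x^(N - r N))" unfolding G_def
      by (rule geo_fin)
    then show ?thesis using x1 by (simp add: field_simps)
  qed
  have G_lim: "G \<longlonglongrightarrow> x / (1 - x)"
  proof -
    have "(\<lambda>N. x^(N - r N)) \<longlonglongrightarrow> 0"
      using filterlim_compose[OF LIMSEQ_power_zero[of x] nr_top] x0 x1 by simp
    then have "(\<lambda>N. x * (1 - x^(N - r N)) / (1 - x)) \<longlonglongrightarrow> x * (1 - 0) / (1 - x)"
      by (intro tendsto_intros) (use x1 in auto)
    then show ?thesis unfolding Gform by simp
  qed
  have Q_lim: "Q \<longlonglongrightarrow> x / (1 - x)"
  proof (rule tendsto_sandwich[of G _ _ "\<lambda>N. G N + (x/(1-x)^2) / real (r N)"])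
    show "eventually (\<lambda>N. G N \<le> Q N) sequentially"
      using eventually_gt_at_top[of 0] ev_r1 by eventually_elim (rule Qlow)
    show "eventually (\<lambda>N. Q N \<le> G N + (x/(1-x)^2) / real (r N)) sequentially"
      using eventually_gt_at_top[of 0] ev_r1 by eventually_elim (rule Qup)
    show "G \<longlonglongrightarrow> x / (1 - x)" by (rule G_lim)
    have "(\<lambda>N. (x/(1-x)^2) / real (r N)) \<longlonglongrightarrow> 0"
      by (intro tendsto_divide_0[OF tendsto_const] filterlim_at_top_imp_at_infinity
          filterlim_compose[OF filterlim_real_sequentially r_top])
    from tendsto_add[OF G_lim this]
    show "(\<lambda>N. G N + (x/(1-x)^2) / real (r N)) \<longlonglongrightarrow> x / (1 - x)" by simp
  qed
  have rN_lim: "(\<lambda>N. real (r N) / real N) \<longlonglongrightarrow> 1 / lam"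
  proof (rule tendsto_sandwich[of "\<lambda>N. 1/lam - 1 / real N" _ _ "\<lambda>N. 1/lam"])
    show "eventually (\<lambda>N. 1/lam - 1 / real N \<le> real (r N) / real N) sequentially"
      using eventually_gt_at_top[of 0]
    proof eventually_elim
      case (elim N)
      have "1/lam - 1 / real N = (real N / lam - 1) / real N" using elim by (simp add: field_simps)
      also have "\<dots> \<le> real (r N) / real N" using rge[of N] elim by (intro divide_right_mono) auto
      finally show ?case .
    qed
    show "eventually (\<lambda>N. real (r N) / real N \<le> 1/lam) sequentially"
      using eventually_gt_at_top[of 0]
    proof eventually_elim
      case (elim N)
      have "real (r N) / real N \<le> (real N / lam) / real N" using rle[of N] elim by (intro divide_right_mono) auto
      also have "\<dots> = 1 / lam" using elim by simp
      finally show ?case .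
    qed
    show "(\<lambda>N. 1/lam) \<longlonglongrightarrow> 1/lam" by simp
    show "(\<lambda>N. 1/lam - 1 / real N) \<longlonglongrightarrow> 1/lam"
      using tendsto_diff[OF tendsto_const[of "1/lam"] lim_inverse_n'] by simp
  qed
  have T_lim: "(\<lambda>N. 1 / (1 - x^N)) \<longlonglongrightarrow> 1"
    using tendsto_divide[OF tendsto_const[of 1] tendsto_diff[OF tendsto_const[of 1] LIMSEQ_power_zero[of x]]] x0 x1
    by simp
  have lim: "(\<lambda>N. (real (r N) / real N) * (\<theta> - 1) * Q N * (1 / (1 - x^N))) \<longlonglongrightarrow> (1/lam) * (\<theta> - 1) * (x / (1 - x)) * 1"
    by (intro tendsto_mult rN_lim Q_lim T_lim tendsto_const)
  have val: "(1/lam) * (\<theta> - 1) * (x / (1 - x)) * 1 = 1 / lam"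
    using th by (simp add: x_def field_simps)
  have eq: "(real (r N) / real N) * (\<theta> - 1) * Q N * (1 / (1 - x^N)) =
    (real (r N) * (1 - \<theta>) * (\<Sum>i = r N..N - 1. \<theta> ^ i / real i)) / (1 - \<theta> ^ N)"
    if N0: "N > 0" and r1: "r N \<ge> 1" for N
  proof -
    have rN: "r N \<le> N" using rltN[OF N0] by simp
    have "(\<Sum>i = r N..N - 1. \<theta> ^ i / real i) = (\<Sum>k=1..N - r N. \<theta> ^ (N-k) / real (N-k))"
      by (rule reindex[OF r1 rN])
    also have "\<dots> = (\<Sum>k=1..N - r N. \<theta>^N / real N * (x^k * real N / real (N-k)))"
    proof (rule sum.cong[OF refl])
      fix k assume k: "k \<in> {1..N - r N}"
      then have kN: "k \<le> N" by auto
      have "\<theta>^N = \<theta>^(N-k) * \<theta>^k" using kN by (simp flip: power_add)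
      then have "\<theta>^N * x^k = \<theta>^(N-k)" using th by (simp add: x_def power_divide)
      then show "\<theta> ^ (N-k) / real (N-k) = \<theta>^N / real N * (x^k * real N / real (N-k))"
        using N0 by (simp add: field_simps)
    qed
    also have "\<dots> = \<theta>^N / real N * Q N" unfolding Q_def by (simp add: sum_distrib_left)
    finally have S: "(\<Sum>i = r N..N - 1. \<theta> ^ i / real i) = \<theta>^N / real N * Q N" .
    have tN: "\<theta>^N > 1" using th N0 by (simp add: one_less_power)
    have xN: "1 - x^N = (\<theta>^N - 1) / \<theta>^N" using th by (simp add: x_def power_divide field_simps)
    show ?thesis unfolding S xN using tN N0 by (simp add: field_simps)
  qed
  have ev: "eventually (\<lambda>N. (real (r N) / real N) * (\<theta> - 1) * Q N * (1 / (1 - x^N)) =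
    (real (r N) * (1 - \<theta>) * (\<Sum>i = r N..N - 1. \<theta> ^ i / real i)) / (1 - \<theta> ^ N)) sequentially"
    using eventually_gt_at_top[of 0] ev_r1 by eventually_elim (rule eq)
  show ?thesis
    using Lim_transform_eventually[OF lim[unfolded val] ev] unfolding r_def .
qed

theorem theorem3p3:
  fixes \<theta> lam :: real
  assumes "\<theta> > 1" and "lam > 1"
  shows "(\<lambda>N. P_win (nat \<lfloor>real N / lam\<rfloor>) N \<theta>) \<longlonglongrightarrow> 1 / lam"
  using main_lim[OF assms] unfolding P_win_def .

end
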